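(* Let $r\ge 2$ and $s\ge 1$ be integers. If $F\in\mathcal{F}_r(n)$, then $\lambda(\overline{K}_s\vee F)=\lambda(\overline{K}_s\vee T_r(n))$.
   Context: $\lambda(\cdot)$ is the spectral radius of the adjacency matrix; $T_r(n)$ is the complete $r$-partite graph on $n$ vertices with part sizes differing by at most one; $\overline{K}_s$ is the edgeless graph on $s$ vertices and $\vee$ denotes the join. The family $\mathcal{F}_r(n)$: write $n=ra+b$ with $0\le b<r$ and $a=\lfloor n/r\rfloor\ge 1$. If $b=0$, $\mathcal{F}_r(n)$ is the set of all $(r-1)a$-regular graphs on $n$ vertices. If $1\le b<r$, $\mathcal{F}_r(n)$ is the set of all graphs $G$ on $n$ vertices having a partition $V(G)=X\sqcup Y$ with $|X|=b(a+1)$, $|Y|=(r-b)a$, such that every vertex of $X$ is adjacent to every vertex of $Y$, $G[X]$ is $(b-1)(a+1)$-regular, and $G[Y]$ is $(r-b-1)a$-regular. *)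

theory Defs
  imports "Jordan_Normal_Form.Spectral_Radius"
begin

definition simple_graph :: "nat \<Rightarrow> (nat \<Rightarrow> nat \<Rightarrow> bool) \<Rightarrow> bool" where
  "simple_graph n G \<longleftrightarrow> (\<forall>i j. G i j \<longrightarrow> i < n \<and> j < n \<and> i \<noteq> j \<and> G j i)"

definition adj_mat :: "nat \<Rightarrow> (nat \<Rightarrow> nat \<Rightarrow> bool) \<Rightarrow> complex mat" where
  "adj_mat n G = mat n n (\<lambda>(i, j). if G i j then 1 else 0)"

definition graph_spectral_radius :: "nat \<Rightarrow> (nat \<Rightarrow> nat \<Rightarrow> bool) \<Rightarrow> real" where
  "graph_spectral_radius n G = spectral_radius (adj_mat n G)"

text \<open>Join of the edgeless graph on s vertices (vertices 0..<s) with a graph F on n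
  vertices (shifted to vertices s..<s+n).\<close>
definition join_empty :: "nat \<Rightarrow> nat \<Rightarrow> (nat \<Rightarrow> nat \<Rightarrow> bool) \<Rightarrow> nat \<Rightarrow> nat \<Rightarrow> bool" where
  "join_empty s n F i j \<longleftrightarrow> i < s + n \<and> j < s + n \<and>
     ((i < s \<and> s \<le> j) \<or> (s \<le> i \<and> j < s) \<or> (s \<le> i \<and> s \<le> j \<and> F (i - s) (j - s)))"

text \<open>Turan graph T_r(n): parts are the residue classes mod r (sizes differ by at most one).\<close>
definition turan :: "nat \<Rightarrow> nat \<Rightarrow> nat \<Rightarrow> nat \<Rightarrow> bool" where
  "turan r n i j \<longleftrightarrow> i < n \<and> j < n \<and> i mod r \<noteq> j mod r"

definition regular_on :: "(nat \<Rightarrow> nat \<Rightarrow> bool) \<Rightarrow> nat set \<Rightarrow> nat \<Rightarrow> bool" where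
  "regular_on G S d \<longleftrightarrow> (\<forall>i\<in>S. card {j\<in>S. G i j} = d)"

definition family_F :: "nat \<Rightarrow> nat \<Rightarrow> (nat \<Rightarrow> nat \<Rightarrow> bool) \<Rightarrow> bool" where
  "family_F r n G \<longleftrightarrow> simple_graph n G \<and>
    (let a = n div r; b = n mod r in
      a \<ge> 1 \<and>
      (if b = 0 then regular_on G {0..<n} ((r - 1) * a)
       else (\<exists>X Y. X \<union> Y = {0..<n} \<and> X \<inter> Y = {} \<and>
               card X = b * (a + 1) \<and> card Y = (r - b) * a \<and>
               (\<forall>x\<in>X. \<forall>y\<in>Y. G x y) \<and>
               regular_on G X ((b - 1) * (a + 1)) \<and>
               regular_on G Y ((r - b - 1) * a))))"

end

theory Submission
  imports Defs
begin


lemma adj_mv: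
  assumes "w \<in> carrier_vec N" "i < N"
  shows "(adj_mat N H *\<^sub>v w) $ i = (\<Sum>j<N. if H i j then w $ j else 0)"
  using assms unfolding adj_mat_def
  by (auto simp: scalar_prod_def lessThan_atLeast0 intro!: sum.cong)

lemma pf_lite:
  fixes N :: nat and H :: "nat \<Rightarrow> nat \<Rightarrow> bool" and v :: "nat \<Rightarrow> real" and lam :: real
  assumes N: "N > 0" and pos: "\<forall>i<N. v i > 0"
    and eq: "\<forall>i<N. (\<Sum>j<N. if H i j then v j else 0) = lam * v i"
  shows "spectral_radius (adj_mat N H) = lam"
proof -
  let ?A = "adj_mat N H"
  have A: "?A \<in> carrier_mat N N" unfolding adj_mat_def by simp
  have "0 \<le> (\<Sum>j<N. if H 0 j then v j else 0)"
    using pos by (intro sum_nonneg) auto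
  hence lam0: "lam \<ge> 0" using eq pos N
    by (metis zero_le_mult_iff linorder_not_le)
  define u where "u = vec N (\<lambda>i. complex_of_real (v i))"
  have u: "u \<in> carrier_vec N" unfolding u_def by simp
  have "u \<noteq> 0\<^sub>v N"
  proof
    assume "u = 0\<^sub>v N"
    hence "u $ 0 = 0" using N by simp
    thus False using pos N unfolding u_def by fastforce
  qed
  moreover have "?A *\<^sub>v u = complex_of_real lam \<cdot>\<^sub>v u"
  proof (rule eq_vecI)
    fix i assume i: "i < dim_vec (complex_of_real lam \<cdot>\<^sub>v u)"
    hence i: "i < N" using u by simp
    have "(?A *\<^sub>v u) $ i = (\<Sum>j<N. if H i j then u $ j else 0)" by (rule adj_mv[OF u i])
    also have "\<dots> = (\<Sum>j<N. complex_of_real (if H i j then v j else 0))"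
      unfolding u_def by (intro sum.cong) auto
    also have "\<dots> = complex_of_real (lam * v i)" using eq i by (simp only: of_real_sum[symmetric])
    finally show "(?A *\<^sub>v u) $ i = (complex_of_real lam \<cdot>\<^sub>v u) $ i" using i u_def by simp
  qed (insert A u, auto)
  ultimately have "eigenvector ?A u (complex_of_real lam)"
    unfolding eigenvector_def using A u by auto
  hence "complex_of_real lam \<in> spectrum ?A" unfolding spectrum_def eigenvalue_def by auto
  hence le1: "lam \<le> spectral_radius ?A"
    using spectral_radius_mem_max(2)[OF A N, of lam] lam0 by force
  obtain mu where mu: "mu \<in> spectrum ?A" and rho: "spectral_radius ?A = norm mu"
    using spectral_radius_mem_max(1)[OF A N] by auto
  then obtain x where ev: "eigenvector ?A x mu" unfolding spectrum_def eigenvalue_def by auto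
  hence x: "x \<in> carrier_vec N" and xnz: "x \<noteq> 0\<^sub>v N" and Ax: "?A *\<^sub>v x = mu \<cdot>\<^sub>v x"
    unfolding eigenvector_def using A by auto
  define f where "f j = norm (x $ j) / v j" for j
  have fin: "finite (f ` {0..<N})" "f ` {0..<N} \<noteq> {}" using N by auto
  obtain i where i: "i < N" "f i = Max (f ` {0..<N})" using Max_in[OF fin] by auto
  have fmax: "f j \<le> f i" if "j < N" for j using i that fin by simp
  have bound: "norm (x $ j) \<le> f i * v j" if "j < N" for j
    using fmax[OF that] pos that unfolding f_def by (simp add: divide_le_eq)
  obtain j where j: "j < N" "x $ j \<noteq> 0"
    using xnz x by (metis eq_vecI carrier_vecD index_zero_vec)
  have "0 < norm (x $ j)" using j by simp
  hence fpos: "f i > 0" using bound[OF j(1)] pos j(1)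
    by (smt (verit) mult_nonpos_nonneg)
  have nxi: "norm (x $ i) = f i * v i" using pos i(1) unfolding f_def by force
  have "norm mu * norm (x $ i) = norm ((?A *\<^sub>v x) $ i)" using Ax i x by (simp add: norm_mult)
  also have "\<dots> = norm (\<Sum>j<N. if H i j then x $ j else 0)" using adj_mv[OF x i(1)] by simp
  also have "\<dots> \<le> (\<Sum>j<N. norm (if H i j then x $ j else 0))" by (rule norm_sum)
  also have "\<dots> \<le> (\<Sum>j<N. f i * (if H i j then v j else 0))"
    by (intro sum_mono) (auto simp: bound)
  also have "\<dots> = f i * (lam * v i)" using eq i by (simp add: sum_distrib_left[symmetric])
  also have "\<dots> = lam * norm (x $ i)" using nxi by simp
  finally have "norm mu * norm (x $ i) \<le> lam * norm (x $ i)" .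
  moreover have "norm (x $ i) > 0" using nxi fpos pos i by simp
  ultimately have "norm mu \<le> lam" by simp
  thus ?thesis using le1 rho by simp
qed


lemma equit_sum:
  fixes w :: "nat \<Rightarrow> real" and N m :: nat and cls :: "nat \<Rightarrow> nat"
  assumes cls: "\<forall>j<N. cls j < m"
    and cnt: "\<forall>l<m. card {j. j<N \<and> H i j \<and> cls j = l} = c l"
  shows "(\<Sum>j<N. if H i j then w (cls j) else 0) = (\<Sum>l<m. of_nat (c l) * w l)"
proof -
  let ?S = "{j. j<N \<and> H i j}"
  have "(\<Sum>j<N. if H i j then w (cls j) else 0) = (\<Sum>j\<in>?S. w (cls j))"
  proof -
    have "(\<Sum>j\<in>{x\<in>{..<N}. H i x}. w (cls j)) = (\<Sum>j<N. if H i j then w (cls j) else 0)"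
      by (rule sum.inter_filter[OF finite_lessThan])
    moreover have "?S = {x\<in>{..<N}. H i x}" by auto
    ultimately show ?thesis by (simp only:)
  qed
  also have "\<dots> = (\<Sum>l<m. \<Sum>j\<in>{j\<in>?S. cls j = l}. w (cls j))"
    by (rule sum.group[symmetric]) (use cls in auto)
  also have "\<dots> = (\<Sum>l<m. of_nat (c l) * w l)"
  proof (intro sum.cong refl)
    fix l assume l: "l \<in> {..<m}"
    have "(\<Sum>j\<in>{j\<in>?S. cls j = l}. w (cls j)) = (\<Sum>j\<in>{j\<in>?S. cls j = l}. w l)" by simp
    also have "\<dots> = of_nat (card {j\<in>?S. cls j = l}) * w l" by simp
    also have "{j\<in>?S. cls j = l} = {j. j<N \<and> H i j \<and> cls j = l}" by auto
    finally show "(\<Sum>j\<in>{j\<in>?S. cls j = l}. w (cls j)) = of_nat (c l) * w l" using cnt l by simp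
  qed
  finally show ?thesis .
qed

lemma equit_rad:
  fixes w :: "nat \<Rightarrow> real"
  assumes N: "N > 0" and cls: "\<forall>j<N. cls j < m"
    and cnt: "\<forall>i<N. \<forall>l<m. card {j. j<N \<and> H i j \<and> cls j = l} = c (cls i) l"
    and wpos: "\<forall>l<m. w l > 0"
    and weq: "\<forall>k<m. (\<Sum>l<m. of_nat (c k l) * w l) = lam * w k"
  shows "spectral_radius (adj_mat N H) = lam"
proof (rule pf_lite[OF N, of "\<lambda>j. w (cls j)"])
  show "\<forall>i<N. 0 < w (cls i)" using cls wpos by auto
  show "\<forall>i<N. (\<Sum>j<N. if H i j then w (cls j) else 0) = lam * w (cls i)"
  proof (intro allI impI)
    fix i assume i: "i < N"
    have "(\<Sum>j<N. if H i j then w (cls j) else 0) = (\<Sum>l<m. of_nat (c (cls i) l) * w l)"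
      by (rule equit_sum[OF cls]) (use cnt i in auto)
    also have "\<dots> = lam * w (cls i)" using weq cls i by auto
    finally show "(\<Sum>j<N. if H i j then w (cls j) else 0) = lam * w (cls i)" .
  qed
qed

lemma join_card0:
  assumes "i < s + n"
  shows "card {j. j < s + n \<and> join_empty s n G i j \<and> j < s} = (if i < s then 0 else s)"
proof -
  have "{j. j < s + n \<and> join_empty s n G i j \<and> j < s} = (if i < s then {} else {0..<s})"
    using assms unfolding join_empty_def by auto
  thus ?thesis by simp
qed

lemma join_cardZ:
  assumes "i < s + n" and Z: "Z \<subseteq> {0..<n}"
  shows "card {j. j < s + n \<and> join_empty s n G i j \<and> s \<le> j \<and> j - s \<in> Z}
       = (if i < s then card Z else card {k\<in>Z. G (i - s) k})"
proof -
  have "{j. j < s + n \<and> join_empty s n G i j \<and> s \<le> j \<and> j - s \<in> Z}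
      = (\<lambda>k. k + s) ` (if i < s then Z else {k\<in>Z. G (i - s) k})"
  proof (cases "i < s")
    case True
    show ?thesis
    proof (intro equalityI subsetI)
      fix j assume "j \<in> {j. j < s + n \<and> join_empty s n G i j \<and> s \<le> j \<and> j - s \<in> Z}"
      thus "j \<in> (\<lambda>k. k + s) ` (if i < s then Z else {k\<in>Z. G (i - s) k})"
        using True by (auto intro!: image_eqI[of _ _ "j - s"])
    next
      fix j assume "j \<in> (\<lambda>k. k + s) ` (if i < s then Z else {k\<in>Z. G (i - s) k})"
      thus "j \<in> {j. j < s + n \<and> join_empty s n G i j \<and> s \<le> j \<and> j - s \<in> Z}"
        using True Z assms(1) unfolding join_empty_def by auto
    qed
  next
    case False
    show ?thesis
    proof (intro equalityI subsetI)
      fix j assume "j \<in> {j. j < s + n \<and> join_empty s n G i j \<and> s \<le> j \<and> j - s \<in> Z}"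
      thus "j \<in> (\<lambda>k. k + s) ` (if i < s then Z else {k\<in>Z. G (i - s) k})"
        using False unfolding join_empty_def by (auto intro!: image_eqI[of _ _ "j - s"])
    next
      fix j assume "j \<in> (\<lambda>k. k + s) ` (if i < s then Z else {k\<in>Z. G (i - s) k})"
      thus "j \<in> {j. j < s + n \<and> join_empty s n G i j \<and> s \<le> j \<and> j - s \<in> Z}"
        using False Z assms(1) unfolding join_empty_def by auto
    qed
  qed
  moreover have "inj_on (\<lambda>k::nat. k + s) A" for A by (auto simp: inj_on_def)
  ultimately show ?thesis by (simp add: card_image)
qed



lemma exist2:
  fixes s n d :: real
  assumes "s > 0" "n > 0" "d \<ge> 0"
  shows "\<exists>lam p q. p > 0 \<and> q > 0 \<and> lam * p = n * q \<and> lam * q = s * p + d * q"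
proof -
  define lam where "lam = (d + sqrt (d^2 + 4*n*s)) / 2"
  have sq: "(sqrt (d^2 + 4*n*s))^2 = d^2 + 4*n*s" using assms by simp
  have "d^2 + 4*n*s > 0" using assms by (simp add: add_nonneg_pos)
  hence sp: "sqrt (d^2 + 4*n*s) > 0" by simp
  have "d + sqrt (d^2 + 4*n*s) > 0" using sp assms(3) by linarith
  hence lp: "lam > 0" unfolding lam_def by simp
  have "lam * lam = s * n + d * lam" unfolding lam_def using sq
    by (simp add: field_simps power2_eq_square)
  thus ?thesis using lp assms by (intro exI[of _ lam] exI[of _ n] exI[of _ lam]) (auto simp: algebra_simps)
qed

lemma exist3:
  fixes s x y dX dY :: real
  assumes s: "s > 0" and x: "x > 0" and y: "y > 0" and dX: "dX \<ge> 0" and dY: "dY \<ge> 0"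
  shows "\<exists>lam p q t. p > 0 \<and> q > 0 \<and> t > 0 \<and> lam * p = x * q + y * t \<and>
     lam * q = s * p + dX * q + y * t \<and> lam * t = s * p + x * q + dY * t"
proof -
  define D where "D l = (l - dX) * (l - dY) - x * y" for l
  define g where "g l = l * D l - s * x * (l - dY + y) - s * y * (l - dX + x)" for l
  define r where "r = sqrt ((dX - dY)^2 + 4*x*y)"
  define l0 where "l0 = (dX + dY + r) / 2"
  have nn: "0 \<le> (dX - dY)^2 + 4*x*y" using x y by (smt (verit) mult_pos_pos zero_le_power2)
  hence r2: "r^2 = (dX - dY)^2 + 4*x*y" unfolding r_def by simp
  have r0: "r \<ge> 0" unfolding r_def using nn by simp
  have rgt: "r > \<bar>dX - dY\<bar>"
  proof -
    have "\<bar>dX - dY\<bar>^2 < r^2" using r2 x y by (simp add: power2_abs)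
    from power_less_imp_less_base[OF this r0] show ?thesis .
  qed
  have l0X: "l0 > dX" and l0Y: "l0 > dY" unfolding l0_def using rgt by auto
  have Dl0: "D l0 = 0" unfolding D_def l0_def using r2 by (simp add: field_simps power2_eq_square)
  have a1: "s * x * (l0 - dY + y) > 0" using l0Y s x y by simp
  have a2: "s * y * (l0 - dX + x) > 0" using l0X s x y by simp
  have gl0: "g l0 < 0" unfolding g_def using Dl0 a1 a2 by simp
  define u where "u = 1 + s * (x + y) + 2 * s * x * y"
  have u1: "u \<ge> 1" unfolding u_def using s x y by (simp add: add_nonneg_nonneg)
  define M where "M = l0 + u"
  have M1: "M \<ge> u" unfolding M_def using l0X dX by simp
  have DM: "D M = u * (u + (l0 - dX) + (l0 - dY))" unfolding D_def M_def using Dl0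
    unfolding D_def by (simp add: algebra_simps)
  hence DMu: "D M \<ge> u * u" using l0X l0Y u1 by (simp add: mult_left_mono)
  have gM: "g M > 0"
  proof -
    have "M * D M \<ge> M * (u * u)" using DMu M1 u1 by (simp add: mult_left_mono)
    moreover have "M * (u * u) = M * u * u" by simp
    moreover have "M * u * u \<ge> M * u" using M1 u1 by simp
    moreover have "M * u = M * 1 + M * s * (x + y) + M * 2 * s * x * y" unfolding u_def
      by (simp add: algebra_simps)
    moreover have "M * 2 * s * x * y \<ge> 2 * s * x * y" using M1 u1 s x y by simp
    moreover have "s * x * (M - dY + y) + s * y * (M - dX + x) \<le> M * s * (x + y) + 2 * s * x * y"
      using s x y dX dY by (simp add: algebra_simps mult_nonneg_nonneg)
    moreover have "M > 0" using M1 u1 by simp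
    ultimately show ?thesis unfolding g_def by linarith
  qed
  have cont: "continuous_on {l0..M} g" unfolding g_def D_def by (intro continuous_intros)
  have "l0 \<le> M" unfolding M_def using u1 by simp
  then obtain l where l: "l0 \<le> l" "l \<le> M" "g l = 0"
    using IVT'[of g l0 0 M] gl0 gM cont by auto
  have ll0: "l > l0" using l gl0 by (cases "l = l0") auto
  have Dpos: "D l > 0"
  proof -
    have "D l = (l - l0) * ((l - l0) + (l0 - dX) + (l0 - dY))" unfolding D_def using Dl0
      unfolding D_def by (simp add: algebra_simps)
    thus ?thesis using ll0 l0X l0Y by simp
  qed
  define q where "q = s * (l - dY + y) / D l"
  define t where "t = s * (l - dX + x) / D l"
  have qp: "q > 0" unfolding q_def using Dpos s y ll0 l0Y by simp
  have tp: "t > 0" unfolding t_def using Dpos s x ll0 l0X by simp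
  have E1: "l * 1 = x * q + y * t"
  proof -
    have "l * D l = s * x * (l - dY + y) + s * y * (l - dX + x)" using l(3) unfolding g_def by simp
    have "x * q + y * t = (s * x * (l - dY + y) + s * y * (l - dX + x)) / D l"
      unfolding q_def t_def by (simp add: add_divide_distrib mult_ac)
    also have "\<dots> = l" using Dpos by (simp add: \<open>l * D l = _\<close>[symmetric])
    finally show ?thesis by simp
  qed
  have n2: "(l - dX) * (s * (l - dY + y)) - y * (s * (l - dX + x)) = s * D l"
    unfolding D_def by (simp add: algebra_simps)
  have "(l - dX) * q - y * t = ((l - dX) * (s * (l - dY + y)) - y * (s * (l - dX + x))) / D l"
    unfolding q_def t_def by (simp add: diff_divide_distrib)
  also have "\<dots> = s" using n2 Dpos by simp
  finally have E2: "l * q = s * 1 + dX * q + y * t" by (simp add: algebra_simps)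
  have n3: "(l - dY) * (s * (l - dX + x)) - x * (s * (l - dY + y)) = s * D l"
    unfolding D_def by (simp add: algebra_simps)
  have "(l - dY) * t - x * q = ((l - dY) * (s * (l - dX + x)) - x * (s * (l - dY + y))) / D l"
    unfolding q_def t_def by (simp add: diff_divide_distrib)
  also have "\<dots> = s" using n3 Dpos by simp
  finally have E3: "l * t = s * 1 + x * q + dY * t" by (simp add: algebra_simps)
  show ?thesis using E1 E2 E3 qp tp by (intro exI[of _ l] exI[of _ 1] exI[of _ q] exI[of _ t]) auto
qed



lemma res_bound:
  fixes q r c a b :: nat
  assumes c: "c < r" and b: "b < r"
  shows "q * r + c < r * a + b \<longleftrightarrow> q < a + (if c < b then 1 else 0)"
proof (cases "q < a")
  case True
  hence "q * r + r \<le> a * r" using mult_le_mono1[of "Suc q" a r] by simp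
  thus ?thesis using True c by (simp add: mult.commute)
next
  case False
  show ?thesis
  proof (cases "q = a")
    case True thus ?thesis by (simp add: mult.commute)
  next
    case False2: False
    hence "a + 1 \<le> q" using False by simp
    hence "a * r + r \<le> q * r" using mult_le_mono1[of "Suc a" q r] by simp
    thus ?thesis using False False2 b by (simp add: mult.commute)
  qed
qed

lemma card_res:
  fixes r a b c :: nat
  assumes c: "c < r" and b: "b < r"
  shows "card {k. k < r * a + b \<and> k mod r = c} = a + (if c < b then 1 else 0)"
proof -
  have r: "r > 0" using c by simp
  have "{k. k < r * a + b \<and> k mod r = c} = (\<lambda>q. q * r + c) ` {..< a + (if c < b then 1 else 0)}"
  proof (intro equalityI subsetI)
    fix k assume k: "k \<in> {k. k < r * a + b \<and> k mod r = c}"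
    have km: "k mod r = c" "k < r * a + b" using k by auto
    have e: "k = (k div r) * r + c" using div_mult_mod_eq[of k r] km(1) by linarith
    have "(k div r) * r + c < r * a + b" using km(2) e by linarith
    hence "k div r < a + (if c < b then 1 else 0)" using res_bound[OF c b, of "k div r" a] by blast
    thus "k \<in> (\<lambda>q. q * r + c) ` {..< a + (if c < b then 1 else 0)}" using e by blast
  next
    fix k assume "k \<in> (\<lambda>q. q * r + c) ` {..< a + (if c < b then 1 else 0)}"
    then obtain q where q: "q < a + (if c < b then 1 else 0)" "k = q * r + c" by auto
    thus "k \<in> {k. k < r * a + b \<and> k mod r = c}" using res_bound[OF c b, of q a] c by simp
  qed
  moreover have "inj_on (\<lambda>q. q * r + c) A" for A using r by (auto simp: inj_on_def)
  ultimately show ?thesis by (simp add: card_image)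
qed

lemma card_resP:
  fixes r N :: nat and P :: "nat \<Rightarrow> bool"
  assumes r: "r > 0"
  shows "card {k. k < N \<and> P (k mod r)} = (\<Sum>c\<in>{c. c < r \<and> P c}. card {k. k < N \<and> k mod r = c})"
proof -
  let ?S = "{k. k < N \<and> P (k mod r)}"
  have "card ?S = (\<Sum>k\<in>?S. 1::nat)" by simp
  also have "\<dots> = (\<Sum>c\<in>{c. c < r \<and> P c}. \<Sum>k\<in>{k\<in>?S. k mod r = c}. 1)"
    by (rule sum.group[symmetric]) (use r in auto)
  also have "\<dots> = (\<Sum>c\<in>{c. c < r \<and> P c}. card {k. k < N \<and> k mod r = c})"
  proof (intro sum.cong refl)
    fix c assume "c \<in> {c. c < r \<and> P c}"
    hence "{k\<in>?S. k mod r = c} = {k. k < N \<and> k mod r = c}" by auto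
    thus "(\<Sum>k\<in>{k\<in>?S. k mod r = c}. 1) = card {k. k < N \<and> k mod r = c}" by simp
  qed
  finally show ?thesis .
qed

lemma card_turan:
  fixes r a b :: nat and P :: "nat \<Rightarrow> bool"
  assumes b: "b < r"
  shows "card {k. k < r * a + b \<and> P (k mod r)} = (\<Sum>c\<in>{c. c < r \<and> P c}. a + (if c < b then 1 else 0))"
proof -
  have r: "r > 0" using b by simp
  show ?thesis by (subst card_resP[OF r]) (intro sum.cong refl, auto simp: card_res b)
qed



lemma struct3:
  fixes G :: "nat \<Rightarrow> nat \<Rightarrow> bool" and X Y :: "nat set" and s n x y dX dY :: nat
    and lam p q t :: real
  assumes XY: "X \<union> Y = {0..<n}" "X \<inter> Y = {}" and cX: "card X = x" and cY: "card Y = y"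
    and cross: "\<forall>a\<in>X. \<forall>b\<in>Y. G a b \<and> G b a"
    and rX: "regular_on G X dX" and rY: "regular_on G Y dY" and s: "s > 0"
    and pos: "p > 0" "q > 0" "t > 0"
    and e1: "lam * p = x * q + y * t" and e2: "lam * q = s * p + dX * q + y * t"
    and e3: "lam * t = s * p + x * q + dY * t"
  shows "spectral_radius (adj_mat (s + n) (join_empty s n G)) = lam"
proof -
  let ?H = "join_empty s n G"
  define cls where "cls j = (if j < s then 0 else if j - s \<in> X then 1 else (2::nat))" for j
  define c where "c k l = (if k = 0 then (if l = 0 then 0 else if l = 1 then x else y)
     else if k = 1 then (if l = 0 then s else if l = 1 then dX else y)
     else (if l = 0 then s else if l = 1 then x else dY))" for k l :: nat
  define w where "w l = (if l = 0 then p else if l = 1 then q else t)" for l :: nat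
  have X: "X \<subseteq> {0..<n}" and Y: "Y \<subseteq> {0..<n}" using XY by auto
  show ?thesis
  proof (rule equit_rad[where m = 3 and cls = cls and c = c and w = w])
    show "0 < s + n" using s by simp
    show "\<forall>j<s + n. cls j < 3" unfolding cls_def by auto
    show "\<forall>l<3. 0 < w l" unfolding w_def using pos by auto
    show "\<forall>k<3. (\<Sum>l<3. real (c k l) * w l) = lam * w k"
      unfolding c_def w_def using e1 e2 e3 by (auto simp: eval_nat_numeral algebra_simps)
    show "\<forall>i<s + n. \<forall>l<3. card {j. j < s + n \<and> ?H i j \<and> cls j = l} = c (cls i) l"
    proof (intro allI impI)
      fix i l :: nat assume i: "i < s + n" and l: "l < 3"
      have s0: "{j. j < s + n \<and> ?H i j \<and> cls j = 0} = {j. j < s + n \<and> ?H i j \<and> j < s}"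
        unfolding cls_def by auto
      have s1: "{j. j < s + n \<and> ?H i j \<and> cls j = 1} = {j. j < s + n \<and> ?H i j \<and> s \<le> j \<and> j - s \<in> X}"
        unfolding cls_def by auto
      have s2: "{j. j < s + n \<and> ?H i j \<and> cls j = 2} = {j. j < s + n \<and> ?H i j \<and> s \<le> j \<and> j - s \<in> Y}"
        unfolding cls_def using XY by auto
      have kX: "card {k\<in>X. G (i - s) k} = (if i - s \<in> X then dX else x)" if "\<not> i < s"
      proof (cases "i - s \<in> X")
        case True thus ?thesis using rX unfolding regular_on_def by simp
      next
        case False
        hence "i - s \<in> Y" using XY i that by auto
        hence "{k\<in>X. G (i - s) k} = X" using cross by auto
        thus ?thesis using False cX by simp
      qed
      have kY: "card {k\<in>Y. G (i - s) k} = (if i - s \<in> X then y else dY)" if "\<not> i < s"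
      proof (cases "i - s \<in> X")
        case True
        hence "{k\<in>Y. G (i - s) k} = Y" using cross by auto
        thus ?thesis using True cY by simp
      next
        case False
        hence "i - s \<in> Y" using XY i that by auto
        thus ?thesis using rY False unfolding regular_on_def by simp
      qed
      have "l = 0 \<or> l = 1 \<or> l = 2" using l by auto
      thus "card {j. j < s + n \<and> ?H i j \<and> cls j = l} = c (cls i) l"
      proof (elim disjE)
        assume "l = 0" thus ?thesis using s0 join_card0[OF i, of G] unfolding c_def cls_def by auto
      next
        assume "l = 1" thus ?thesis using s1 join_cardZ[OF i X, of G] kX cX unfolding c_def cls_def by auto
      next
        assume "l = 2" thus ?thesis using s2 join_cardZ[OF i Y, of G] kY cY unfolding c_def cls_def by auto
      qed
    qed
  qed
qed

lemma struct2:
  fixes G :: "nat \<Rightarrow> nat \<Rightarrow> bool" and s n d :: nat and lam p q :: real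
  assumes rG: "regular_on G {0..<n} d" and s: "s > 0"
    and pos: "p > 0" "q > 0"
    and e1: "lam * p = n * q" and e2: "lam * q = s * p + d * q"
  shows "spectral_radius (adj_mat (s + n) (join_empty s n G)) = lam"
proof -
  let ?H = "join_empty s n G"
  define cls where "cls j = (if j < s then 0 else (1::nat))" for j
  define c where "c k l = (if k = 0 then (if l = 0 then 0 else n)
     else (if l = 0 then s else d))" for k l :: nat
  define w where "w l = (if l = 0 then p else q)" for l :: nat
  show ?thesis
  proof (rule equit_rad[where m = 2 and cls = cls and c = c and w = w])
    show "0 < s + n" using s by simp
    show "\<forall>j<s + n. cls j < 2" unfolding cls_def by auto
    show "\<forall>l<2. 0 < w l" unfolding w_def using pos by auto
    show "\<forall>k<2. (\<Sum>l<2. real (c k l) * w l) = lam * w k"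
      unfolding c_def w_def using e1 e2 by (auto simp: eval_nat_numeral algebra_simps)
    show "\<forall>i<s + n. \<forall>l<2. card {j. j < s + n \<and> ?H i j \<and> cls j = l} = c (cls i) l"
    proof (intro allI impI)
      fix i l :: nat assume i: "i < s + n" and l: "l < 2"
      have s0: "{j. j < s + n \<and> ?H i j \<and> cls j = 0} = {j. j < s + n \<and> ?H i j \<and> j < s}"
        unfolding cls_def by auto
      have s1: "{j. j < s + n \<and> ?H i j \<and> cls j = 1} = {j. j < s + n \<and> ?H i j \<and> s \<le> j \<and> j - s \<in> {0..<n}}"
        unfolding cls_def by auto
      have k: "card {k\<in>{0..<n}. G (i - s) k} = d" if "\<not> i < s"
        using rG that i unfolding regular_on_def by auto
      have "l = 0 \<or> l = 1" using l by auto
      thus "card {j. j < s + n \<and> ?H i j \<and> cls j = l} = c (cls i) l"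
      proof (elim disjE)
        assume "l = 0" thus ?thesis using s0 join_card0[OF i, of G] unfolding c_def cls_def by auto
      next
        assume "l = 1" thus ?thesis using s1 join_cardZ[OF i order.refl, of G] k unfolding c_def cls_def by auto
      qed
    qed
  qed
qed



lemma sum_const_on:
  fixes f :: "nat \<Rightarrow> nat"
  assumes "\<forall>c\<in>A. f c = v"
  shows "sum f A = card A * v"
  using assms by simp

lemma turan_XT:
  fixes r n a b :: nat
  assumes nE: "n = r * a + b" and b: "b < r"
  shows "card {k. k < n \<and> k mod r < b} = b * (a + 1)"
proof -
  have "card {k. k < n \<and> k mod r < b} = (\<Sum>c\<in>{c. c < r \<and> c < b}. a + (if c < b then 1 else 0))"
    unfolding nE by (rule card_turan[OF b])
  also have "\<dots> = card {c. c < r \<and> c < b} * (a + 1)" by (rule sum_const_on) auto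
  also have "{c. c < r \<and> c < b} = {..<b}" using b by auto
  finally show ?thesis by simp
qed

lemma turan_YT:
  fixes r n a b :: nat
  assumes nE: "n = r * a + b" and b: "b < r"
  shows "card {k. k < n \<and> \<not> k mod r < b} = (r - b) * a"
proof -
  have "card {k. k < n \<and> \<not> k mod r < b} = (\<Sum>c\<in>{c. c < r \<and> \<not> c < b}. a + (if c < b then 1 else 0))"
    unfolding nE by (rule card_turan[OF b])
  also have "\<dots> = card {c. c < r \<and> \<not> c < b} * a" by (rule sum_const_on) auto
  also have "{c. c < r \<and> \<not> c < b} = {b..<r}" using b by auto
  finally show ?thesis by simp
qed

lemma turan_regX:
  fixes r n a b :: nat
  assumes nE: "n = r * a + b" and b: "b < r"
  shows "regular_on (turan r n) {k. k < n \<and> k mod r < b} ((b - 1) * (a + 1))"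
  unfolding regular_on_def
proof
  fix i assume i: "i \<in> {k. k < n \<and> k mod r < b}"
  have e: "{j \<in> {k. k < n \<and> k mod r < b}. turan r n i j} = {k. k < n \<and> (k mod r < b \<and> k mod r \<noteq> i mod r)}"
    using i unfolding turan_def by auto
  have "card {k. k < n \<and> (k mod r < b \<and> k mod r \<noteq> i mod r)} =
     (\<Sum>c\<in>{c. c < r \<and> (c < b \<and> c \<noteq> i mod r)}. a + (if c < b then 1 else 0))"
    unfolding nE by (rule card_turan[OF b])
  also have "\<dots> = card {c. c < r \<and> (c < b \<and> c \<noteq> i mod r)} * (a + 1)" by (rule sum_const_on) auto
  also have "{c. c < r \<and> (c < b \<and> c \<noteq> i mod r)} = {..<b} - {i mod r}" using b by auto
  also have "card ({..<b} - {i mod r}) = b - 1" using i by simp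
  finally show "card {j \<in> {k. k < n \<and> k mod r < b}. turan r n i j} = (b - 1) * (a + 1)" using e by simp
qed

lemma turan_regY:
  fixes r n a b :: nat
  assumes nE: "n = r * a + b" and b: "b < r"
  shows "regular_on (turan r n) {k. k < n \<and> \<not> k mod r < b} ((r - b - 1) * a)"
  unfolding regular_on_def
proof
  fix i assume i: "i \<in> {k. k < n \<and> \<not> k mod r < b}"
  have r: "r > 0" using b by simp
  have e: "{j \<in> {k. k < n \<and> \<not> k mod r < b}. turan r n i j} = {k. k < n \<and> (\<not> k mod r < b \<and> k mod r \<noteq> i mod r)}"
    using i unfolding turan_def by auto
  have "card {k. k < n \<and> (\<not> k mod r < b \<and> k mod r \<noteq> i mod r)} =
     (\<Sum>c\<in>{c. c < r \<and> (\<not> c < b \<and> c \<noteq> i mod r)}. a + (if c < b then 1 else 0))"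
    unfolding nE by (rule card_turan[OF b])
  also have "\<dots> = card {c. c < r \<and> (\<not> c < b \<and> c \<noteq> i mod r)} * a" by (rule sum_const_on) auto
  also have "{c. c < r \<and> (\<not> c < b \<and> c \<noteq> i mod r)} = {b..<r} - {i mod r}" using b by auto
  also have "card ({b..<r} - {i mod r}) = r - b - 1" using i r by simp
  finally show "card {j \<in> {k. k < n \<and> \<not> k mod r < b}. turan r n i j} = (r - b - 1) * a" using e by simp
qed

lemma turan_reg0:
  fixes r n a :: nat
  assumes nE: "n = r * a" and r: "r > 0"
  shows "regular_on (turan r n) {0..<n} ((r - 1) * a)"
  unfolding regular_on_def
proof
  fix i assume i: "i \<in> {0..<n}"
  have nE': "n = r * a + 0" using nE by simp
  have e: "{j \<in> {0..<n}. turan r n i j} = {k. k < n \<and> k mod r \<noteq> i mod r}"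
    using i unfolding turan_def by auto
  have "card {k. k < n \<and> k mod r \<noteq> i mod r} =
     (\<Sum>c\<in>{c. c < r \<and> c \<noteq> i mod r}. a + (if c < 0 then 1 else 0))"
    unfolding nE' by (rule card_turan[OF r])
  also have "\<dots> = card {c. c < r \<and> c \<noteq> i mod r} * a" by (rule sum_const_on) auto
  also have "{c. c < r \<and> c \<noteq> i mod r} = {..<r} - {i mod r}" by auto
  also have "card ({..<r} - {i mod r}) = r - 1" using r by simp
  finally show "card {j \<in> {0..<n}. turan r n i j} = (r - 1) * a" using e by simp
qed



theorem lemma3p5:
  fixes r s n :: nat and F :: "nat \<Rightarrow> nat \<Rightarrow> bool"
  assumes "r \<ge> 2" and "s \<ge> 1" and "family_F r n F"
  shows "graph_spectral_radius (s + n) (join_empty s n F) =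
         graph_spectral_radius (s + n) (join_empty s n (turan r n))"
proof -
  define a where "a = n div r"
  define b where "b = n mod r"
  have r0: "r > 0" using assms(1) by simp
  have s0: "s > 0" using assms(2) by simp
  have nE: "n = r * a + b" unfolding a_def b_def by simp
  have br: "b < r" unfolding b_def using r0 by simp
  have sg: "simple_graph n F" and a1: "a \<ge> 1"
    and fam: "if b = 0 then regular_on F {0..<n} ((r - 1) * a)
       else (\<exists>X Y. X \<union> Y = {0..<n} \<and> X \<inter> Y = {} \<and>
               card X = b * (a + 1) \<and> card Y = (r - b) * a \<and>
               (\<forall>x\<in>X. \<forall>y\<in>Y. F x y) \<and>
               regular_on F X ((b - 1) * (a + 1)) \<and>
               regular_on F Y ((r - b - 1) * a))"
    using assms(3) unfolding family_F_def a_def b_def Let_def by auto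
  show ?thesis
  proof (cases "b = 0")
    case True
    have regF: "regular_on F {0..<n} ((r - 1) * a)" using fam True by simp
    have nE0: "n = r * a" using nE True by simp
    have regT: "regular_on (turan r n) {0..<n} ((r - 1) * a)" by (rule turan_reg0[OF nE0 r0])
    have "n > 0" using nE0 r0 a1 by simp
    then obtain lam p q where pq: "p > 0" "q > 0"
      and e1: "lam * p = real n * q" and e2: "lam * q = real s * p + real ((r - 1) * a) * q"
      using exist2[of "real s" "real n" "real ((r - 1) * a)"] s0 by auto
    show ?thesis unfolding graph_spectral_radius_def
      using struct2[OF regF s0 pq e1 e2] struct2[OF regT s0 pq e1 e2] by simp
  next
    case False
    obtain X Y where XY: "X \<union> Y = {0..<n}" "X \<inter> Y = {}"
      and cX: "card X = b * (a + 1)" and cY: "card Y = (r - b) * a"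
      and crF: "\<forall>x\<in>X. \<forall>y\<in>Y. F x y"
      and rX: "regular_on F X ((b - 1) * (a + 1))" and rY: "regular_on F Y ((r - b - 1) * a)"
      using fam False by auto
    have cross: "\<forall>x\<in>X. \<forall>y\<in>Y. F x y \<and> F y x" using crF sg unfolding simple_graph_def by blast
    define XT where "XT = {k. k < n \<and> k mod r < b}"
    define YT where "YT = {k. k < n \<and> \<not> k mod r < b}"
    have XYT: "XT \<union> YT = {0..<n}" "XT \<inter> YT = {}" unfolding XT_def YT_def by auto
    have cXT: "card XT = b * (a + 1)" unfolding XT_def by (rule turan_XT[OF nE br])
    have cYT: "card YT = (r - b) * a" unfolding YT_def by (rule turan_YT[OF nE br])
    have crT: "\<forall>x\<in>XT. \<forall>y\<in>YT. turan r n x y \<and> turan r n y x"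
      unfolding XT_def YT_def turan_def by auto
    have rXT: "regular_on (turan r n) XT ((b - 1) * (a + 1))" unfolding XT_def by (rule turan_regX[OF nE br])
    have rYT: "regular_on (turan r n) YT ((r - b - 1) * a)" unfolding YT_def by (rule turan_regY[OF nE br])
    have xp: "real (b * (a + 1)) > 0" using False by (simp only: of_nat_0_less_iff) simp
    have yp: "real ((r - b) * a) > 0" using br a1 by simp
    obtain lam p q t where pqt: "p > 0" "q > 0" "t > 0"
      and e1: "lam * p = real (b * (a + 1)) * q + real ((r - b) * a) * t"
      and e2: "lam * q = real s * p + real ((b - 1) * (a + 1)) * q + real ((r - b) * a) * t"
      and e3: "lam * t = real s * p + real (b * (a + 1)) * q + real ((r - b - 1) * a) * t"
      using exist3[OF _ xp yp, of "real s" "real ((b - 1) * (a + 1))" "real ((r - b - 1) * a)"] s0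
      by auto
    show ?thesis unfolding graph_spectral_radius_def
      using struct3[OF XY cX cY cross rX rY s0 pqt e1 e2 e3]
        struct3[OF XYT cXT cYT crT rXT rYT s0 pqt e1 e2 e3] by simp
  qed
qed

end
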